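(* Let $A$ be a real symmetric $n\times n$ matrix such that the graph $\mathcal{G}(A)$ is connected and all nonzero off-diagonal entries of $A$ have the same sign. Let $S\subseteq\{1,\dots,n\}$ and $Z=\{{\bf e}_j: j\in S\}$. Then $\operatorname{rank}\widetilde W(A,Z)=n$ if and only if $\mathcal{L}(A,Z)=gl(n,\mathbb{R})$.
   Context: ${\bf e}_j$ is the $j$th standard basis vector of $\mathbb{R}^n$. For a real symmetric $A=[a_{kj}]$, $\mathcal{G}(A)$ is the simple graph on $\{1,\dots,n\}$ with edges $\{kj: a_{kj}\neq0,\ k\neq j\}$. For $Z=\{{\bf z}_1,\dots,{\bf z}_s\}\subset\mathbb{R}^n$, $\widetilde W(A,Z):=[{\bf z}_1, A{\bf z}_1,\dots,A^{n-1}{\bf z}_1,\dots,{\bf z}_s,A{\bf z}_s,\dots,A^{n-1}{\bf z}_s]$ (an $n\times(ns)$ matrix), and $\mathcal{L}(A,Z)$ is the real Lie algebra generated by $A,{\bf z}_1{\bf z}_1^T,\dots,{\bf z}_s{\bf z}_s^T$ (smallest real vector space containing them closed under $[X,Y]=XY-YX$). $gl(n,\mathbb{R})$ is the Lie algebra of all real $n\times n$ matrices. *)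

theory Defs
  imports "HOL-Analysis.Analysis"
begin

(* matrix powers w.r.t. matrix product ** (note: * on vectors is componentwise) *)
primrec matpow :: "real^'n^'n \<Rightarrow> nat \<Rightarrow> real^'n^'n" where
  "matpow A 0 = mat 1"
| "matpow A (Suc k) = A ** matpow A k"

definition graph_adj :: "real^'n^'n \<Rightarrow> 'n \<Rightarrow> 'n \<Rightarrow> bool" where
  "graph_adj A k j \<longleftrightarrow> k \<noteq> j \<and> A $ k $ j \<noteq> 0"

definition graph_connected :: "real^'n^'n \<Rightarrow> bool" where
  "graph_connected A \<longleftrightarrow> (\<forall>i j. (graph_adj A)\<^sup>*\<^sup>* i j)"

(* column vectors of the matrix W~(A,Z), Z = {e_j : j \<in> S};
   its rank is the dimension of the span of its columns *)
definition W_cols :: "real^'n^'n \<Rightarrow> 'n set \<Rightarrow> (real^'n) set" where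
  "W_cols A S = {matpow A k *v axis j 1 | j k. j \<in> S \<and> k < CARD('n)}"

definition W_rank :: "real^'n^'n \<Rightarrow> 'n set \<Rightarrow> nat" where
  "W_rank A S = dim (span (W_cols A S))"

definition outer :: "real^'n \<Rightarrow> real^'n^'n" where
  "outer z = (\<chi> i j. z $ i * z $ j)"

definition lie_bracket :: "real^'n^'n \<Rightarrow> real^'n^'n \<Rightarrow> real^'n^'n" where
  "lie_bracket X Y = X ** Y - Y ** X"

inductive_set lie_gen :: "(real^'n^'n) set \<Rightarrow> (real^'n^'n) set" for G where
  base: "X \<in> G \<Longrightarrow> X \<in> lie_gen G"
| zero: "0 \<in> lie_gen G"
| add: "X \<in> lie_gen G \<Longrightarrow> Y \<in> lie_gen G \<Longrightarrow> X + Y \<in> lie_gen G"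
| scale: "X \<in> lie_gen G \<Longrightarrow> (c::real) *\<^sub>R X \<in> lie_gen G"
| bracket: "X \<in> lie_gen G \<Longrightarrow> Y \<in> lie_gen G \<Longrightarrow> lie_bracket X Y \<in> lie_gen G"

definition lie_AZ :: "real^'n^'n \<Rightarrow> 'n set \<Rightarrow> (real^'n^'n) set" where
  "lie_AZ A S = lie_gen (insert A {outer (axis j 1) | j. j \<in> S})"

end

theory Submission
  imports Defs
begin

definition outer2 :: "real^'n \<Rightarrow> real^'n \<Rightarrow> real^'n^'n" where
  "outer2 x y = (\<chi> i j. x $ i * y $ j)"

lemma outer_eq: "outer z = outer2 z z"
  by (simp add: outer_def outer2_def)

lemma outer2_add1: "outer2 (x + y) z = outer2 x z + outer2 y z"
  by (simp add: outer2_def vec_eq_iff algebra_simps)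
lemma outer2_add2: "outer2 z (x + y) = outer2 z x + outer2 z y"
  by (simp add: outer2_def vec_eq_iff algebra_simps)
lemma outer2_scale1: "outer2 (c *\<^sub>R x) z = c *\<^sub>R outer2 x z"
  by (simp add: outer2_def vec_eq_iff algebra_simps)
lemma outer2_scale2: "outer2 z (c *\<^sub>R x) = c *\<^sub>R outer2 z x"
  by (simp add: outer2_def vec_eq_iff algebra_simps)
lemma outer2_diff1: "outer2 (x - y) z = outer2 x z - outer2 y z"
  by (simp add: outer2_def vec_eq_iff algebra_simps)
lemma outer2_diff2: "outer2 z (x - y) = outer2 z x - outer2 z y"
  by (simp add: outer2_def vec_eq_iff algebra_simps)
lemma outer2_zero1: "outer2 0 z = 0"
  by (simp add: outer2_def vec_eq_iff)
lemma outer2_zero2: "outer2 z 0 = 0"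
  by (simp add: outer2_def vec_eq_iff)

lemma outer2_mult: "outer2 a b ** outer2 c d = (inner b c) *\<^sub>R outer2 a d"
proof -
  have "\<forall>i ia. (\<Sum>k\<in>UNIV. a $ i * b $ k * (c $ k * d $ ia)) = (\<Sum>i\<in>UNIV. b $ i * c $ i) * (a $ i * d $ ia)"
  proof (intro allI)
    fix i ia
    have "(\<Sum>k\<in>UNIV. a $ i * b $ k * (c $ k * d $ ia)) = (\<Sum>k\<in>UNIV. (b $ k * c $ k) * (a $ i * d $ ia))"
      by (rule sum.cong) (simp_all add: mult_ac)
    also have "\<dots> = (\<Sum>i\<in>UNIV. b $ i * c $ i) * (a $ i * d $ ia)"
      by (rule sum_distrib_right[symmetric])
    finally show "(\<Sum>k\<in>UNIV. a $ i * b $ k * (c $ k * d $ ia)) = (\<Sum>i\<in>UNIV. b $ i * c $ i) * (a $ i * d $ ia)" .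
  qed
  then show ?thesis
    unfolding outer2_def matrix_matrix_mult_def vec_eq_iff inner_vec_def by simp
qed

lemma bracket_outer2:
  "lie_bracket (outer2 a b) (outer2 c d) = (inner b c) *\<^sub>R outer2 a d - (inner d a) *\<^sub>R outer2 c b"
  by (simp add: lie_bracket_def outer2_mult)

lemma outer2_matA:
  assumes "transpose A = A"
  shows "outer2 a b ** A = outer2 a (A *v b)" and "A ** outer2 a b = outer2 (A *v a) b"
proof -
  have s: "\<And>i j. A $ i $ j = A $ j $ i"
  proof -
    fix i j
    have "(transpose A) $ j $ i = A $ j $ i" using assms by simp
    then show "A $ i $ j = A $ j $ i" by (simp add: transpose_def)
  qed
  show "outer2 a b ** A = outer2 a (A *v b)"
    by (simp add: outer2_def matrix_matrix_mult_def vec_eq_iff matrix_vector_mult_def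
        sum_distrib_left algebra_simps s)
  show "A ** outer2 a b = outer2 (A *v a) b"
    by (simp add: outer2_def matrix_matrix_mult_def vec_eq_iff matrix_vector_mult_def
        sum_distrib_right sum_distrib_left mult_ac)
qed

lemma bracket_outer2_A:
  assumes "transpose A = A"
  shows "lie_bracket (outer2 a b) A = outer2 a (A *v b) - outer2 (A *v a) b"
  using outer2_matA[OF assms] by (simp add: lie_bracket_def)

lemma lie_gen_subspace: "subspace (lie_gen G)"
  unfolding subspace_def by (auto intro: lie_gen.intros)

lemma lg_diff: "X \<in> lie_gen G \<Longrightarrow> Y \<in> lie_gen G \<Longrightarrow> X - Y \<in> lie_gen G"
  using lie_gen_subspace subspace_diff by blast

lemma two_mat: "(2::real^'n^'n) * M = (2::real) *\<^sub>R M"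
  by (simp add: vec_eq_iff)

lemma lg_lin: "X \<in> lie_gen G \<Longrightarrow> Y \<in> lie_gen G \<Longrightarrow> a *\<^sub>R X + b *\<^sub>R Y \<in> lie_gen G"
  by (intro lie_gen.add lie_gen.scale)

lemma lb_diff2: "lie_bracket X (Y - Z) = lie_bracket X Y - lie_bracket X Z"
  by (simp add: lie_bracket_def matrix_matrix_mult_def vec_eq_iff sum_subtractf algebra_simps sum.distrib)

lemma nonorth:
  assumes xx: "outer2 x x \<in> lie_gen G" and yy: "outer2 y y \<in> lie_gen G" and s: "inner x y \<noteq> 0"
  shows "outer2 x y \<in> lie_gen G \<and> outer2 y x \<in> lie_gen G"
proof -
  let ?L = "lie_gen G"
  let ?s = "inner x y"
  have x0: "inner x x \<noteq> 0" using s by auto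
  have "lie_bracket (outer2 x x) (outer2 y y) = ?s *\<^sub>R (outer2 x y - outer2 y x)"
    by (simp add: bracket_outer2 inner_commute algebra_simps)
  moreover have "lie_bracket (outer2 x x) (outer2 y y) \<in> ?L"
    using xx yy by (rule lie_gen.bracket)
  ultimately have "(1/?s) *\<^sub>R (?s *\<^sub>R (outer2 x y - outer2 y x)) \<in> ?L"
    by (metis lie_gen.scale)
  hence K: "outer2 x y - outer2 y x \<in> ?L" using s by simp
  have "lie_bracket (outer2 x x) (outer2 x y - outer2 y x)
     = inner x x *\<^sub>R (outer2 x y + outer2 y x) - (2 * ?s) *\<^sub>R outer2 x x"
    by (simp add: lb_diff2 bracket_outer2 inner_commute algebra_simps two_mat)
  moreover have "lie_bracket (outer2 x x) (outer2 x y - outer2 y x) \<in> ?L"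
    using xx K by (rule lie_gen.bracket)
  ultimately have "(1 / inner x x) *\<^sub>R (inner x x *\<^sub>R (outer2 x y + outer2 y x) - (2 * ?s) *\<^sub>R outer2 x x)
      + ((2 * ?s) / inner x x) *\<^sub>R outer2 x x \<in> ?L"
    using xx lg_lin by metis
  hence Sy: "outer2 x y + outer2 y x \<in> ?L" using x0 by (simp add: algebra_simps)
  have "(1/2) *\<^sub>R (outer2 x y + outer2 y x) + (1/2) *\<^sub>R (outer2 x y - outer2 y x) \<in> ?L"
    using Sy K lg_lin by blast
  moreover have "(1/2) *\<^sub>R (outer2 x y + outer2 y x) + (-1/2) *\<^sub>R (outer2 x y - outer2 y x) \<in> ?L"
    using Sy K lg_lin by blast
  ultimately show ?thesis by (simp add: algebra_simps)
qed

lemma skew_split: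
  assumes xx: "outer2 x x \<in> lie_gen G" and x0: "x \<noteq> 0" and K: "outer2 x y - outer2 y x \<in> lie_gen G"
  shows "outer2 x y \<in> lie_gen G \<and> outer2 y x \<in> lie_gen G"
proof -
  let ?L = "lie_gen G"
  let ?s = "inner x y"
  have x0: "inner x x \<noteq> 0" using x0 by auto
  have "lie_bracket (outer2 x x) (outer2 x y - outer2 y x)
     = inner x x *\<^sub>R (outer2 x y + outer2 y x) - (2 * ?s) *\<^sub>R outer2 x x"
    by (simp add: lb_diff2 bracket_outer2 inner_commute algebra_simps two_mat)
  moreover have "lie_bracket (outer2 x x) (outer2 x y - outer2 y x) \<in> ?L"
    using xx K by (rule lie_gen.bracket)
  ultimately have "(1 / inner x x) *\<^sub>R (inner x x *\<^sub>R (outer2 x y + outer2 y x) - (2 * ?s) *\<^sub>R outer2 x x)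
      + ((2 * ?s) / inner x x) *\<^sub>R outer2 x x \<in> ?L"
    using xx lg_lin by metis
  hence Sy: "outer2 x y + outer2 y x \<in> ?L" using x0 by (simp add: algebra_simps)
  have "(1/2) *\<^sub>R (outer2 x y + outer2 y x) + (1/2) *\<^sub>R (outer2 x y - outer2 y x) \<in> ?L"
    using Sy K lg_lin by blast
  moreover have "(1/2) *\<^sub>R (outer2 x y + outer2 y x) + (-1/2) *\<^sub>R (outer2 x y - outer2 y x) \<in> ?L"
    using Sy K lg_lin by blast
  ultimately show ?thesis by (simp add: algebra_simps)
qed

lemma chain:
  assumes "outer2 a x \<in> lie_gen G" "outer2 x b \<in> lie_gen G" "outer2 x x \<in> lie_gen G" "x \<noteq> 0"
  shows "outer2 a b \<in> lie_gen G"
proof -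
  have x0: "inner x x \<noteq> 0" using assms(4) by auto
  have "lie_bracket (outer2 a x) (outer2 x b) \<in> lie_gen G"
    using assms(1,2) by (rule lie_gen.bracket)
  hence "(1 / inner x x) *\<^sub>R lie_bracket (outer2 a x) (outer2 x b) + (inner b a / inner x x) *\<^sub>R outer2 x x \<in> lie_gen G"
    using assms(3) lg_lin by blast
  then show ?thesis using x0 by (simp add: bracket_outer2 algebra_simps)
qed

lemma ext_step:
  assumes A: "A \<in> lie_gen G" and sym: "transpose A = A" and xx: "outer2 x x \<in> lie_gen G"
    and xp: "outer2 x p \<in> lie_gen G" and px: "outer2 p x \<in> lie_gen G"
    and d: "A *v x = p + q" and x0: "x \<noteq> 0"
  shows "outer2 x q \<in> lie_gen G \<and> outer2 q x \<in> lie_gen G"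
proof -
  have "lie_bracket (outer2 x x) A \<in> lie_gen G" using xx A by (rule lie_gen.bracket)
  moreover have "lie_bracket (outer2 x x) A = outer2 x p + outer2 x q - outer2 p x - outer2 q x"
    by (simp add: bracket_outer2_A[OF sym] d outer2_add1 outer2_add2)
  ultimately have "outer2 x p + outer2 x q - outer2 p x - outer2 q x - outer2 x p + outer2 p x \<in> lie_gen G"
    using xp px by (metis lie_gen.add lg_diff)
  hence "outer2 x q - outer2 q x \<in> lie_gen G" by (simp add: algebra_simps)
  then show ?thesis using skew_split xx x0 by blast
qed

lemma sub1: "subspace {x. outer2 x b \<in> lie_gen G}"
  unfolding subspace_def
  by (auto simp: outer2_zero1 outer2_add1 outer2_scale1 intro: lie_gen.intros)

lemma sub2: "subspace {y. outer2 a y \<in> lie_gen G}"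
  unfolding subspace_def
  by (auto simp: outer2_zero2 outer2_add2 outer2_scale2 intro: lie_gen.intros)

lemma good_span:
  assumes "\<forall>a\<in>B. \<forall>b\<in>B. outer2 a b \<in> lie_gen G"
  shows "\<forall>x\<in>span B. \<forall>y\<in>span B. outer2 x y \<in> lie_gen G"
proof (intro ballI)
  fix x y assume x: "x \<in> span B" and y: "y \<in> span B"
  have "\<forall>b\<in>B. outer2 x b \<in> lie_gen G"
  proof
    fix b assume "b \<in> B"
    then have "B \<subseteq> {x. outer2 x b \<in> lie_gen G}" using assms by auto
    then have "span B \<subseteq> {x. outer2 x b \<in> lie_gen G}" using sub1 span_minimal by blast
    then show "outer2 x b \<in> lie_gen G" using x by auto
  qed
  then have "span B \<subseteq> {y. outer2 x y \<in> lie_gen G}" using sub2 span_minimal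
    by (metis mem_Collect_eq subsetI)
  then show "outer2 x y \<in> lie_gen G" using y by auto
qed

definition good :: "(real^'n^'n) set \<Rightarrow> (real^'n) set \<Rightarrow> bool" where
  "good G V \<longleftrightarrow> subspace V \<and> (\<forall>x\<in>V. \<forall>y\<in>V. outer2 x y \<in> lie_gen G)"

lemma good_span_insert:
  assumes "good G V" "outer2 z z \<in> lie_gen G" "\<forall>v\<in>V. outer2 v z \<in> lie_gen G \<and> outer2 z v \<in> lie_gen G"
  shows "good G (span (insert z V))"
proof -
  have "\<forall>a\<in>insert z V. \<forall>b\<in>insert z V. outer2 a b \<in> lie_gen G"
    using assms unfolding good_def by auto
  then show ?thesis unfolding good_def using good_span by blast
qed

lemma exists_max:
  fixes G :: "(real^'n^'n) set"
  shows "\<exists>V. good G V \<and> (\<forall>W. good G W \<and> V \<subseteq> W \<longrightarrow> W = V)"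
proof -
  define D where "D = {dim V | V :: (real^'n) set. good G V}"
  have g0: "good G {0}" unfolding good_def by (auto simp: subspace_0 outer2_zero1 intro: lie_gen.zero)
  hence "dim {0::real^'n} \<in> D" unfolding D_def by blast
  hence ne: "D \<noteq> {}" by auto
  have fin: "finite D"
  proof (rule finite_subset)
    show "D \<subseteq> {..CARD('n)}" unfolding D_def using dim_subset_UNIV_cart by fastforce
  qed simp
  have "Max D \<in> D" using fin ne by simp
  then obtain V where V: "good G V" "dim V = Max D" unfolding D_def by auto
  show ?thesis
  proof (intro exI conjI allI impI)
    show "good G V" by fact
    fix W assume W: "good G W \<and> V \<subseteq> W"
    have "dim W \<in> D" using W unfolding D_def by auto
    hence "dim W \<le> dim V" using V fin by simp
    then show "W = V" using subspace_dim_equal[of V W] W V unfolding good_def by auto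
  qed
qed

lemma max_invariant:
  assumes g: "good G V" and mx: "\<forall>W. good G W \<and> V \<subseteq> W \<longrightarrow> W = V"
    and A: "A \<in> lie_gen G" and sym: "transpose A = A" and x: "x \<in> V"
  shows "A *v x \<in> V"
proof (cases "x = 0")
  case True
  then show ?thesis using g unfolding good_def by (simp add: subspace_0)
next
  case False
  have sV: "subspace V" and oV: "\<forall>x\<in>V. \<forall>y\<in>V. outer2 x y \<in> lie_gen G" using g unfolding good_def by auto
  have spV: "span V = V" using sV by simp
  obtain y z where y: "y \<in> span V" and z: "\<And>w. w \<in> span V \<Longrightarrow> orthogonal z w" and d: "A *v x = y + z"
    using orthogonal_subspace_decomp_exists[of V "A *v x"] by metis
  have yV: "y \<in> V" using y spV by simp
  have zo: "\<And>w. w \<in> V \<Longrightarrow> inner z w = 0" using z spV by (simp add: orthogonal_def)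
  have xx: "outer2 x x \<in> lie_gen G" and xy: "outer2 x y \<in> lie_gen G" and yx: "outer2 y x \<in> lie_gen G"
    using oV x yV by auto
  from ext_step[OF A sym xx xy yx d False]
  have xz: "outer2 x z \<in> lie_gen G" and zx: "outer2 z x \<in> lie_gen G" by auto
  have zz: "outer2 z z \<in> lie_gen G" using chain[OF zx xz xx False] .
  have "\<forall>v\<in>V. outer2 v z \<in> lie_gen G \<and> outer2 z v \<in> lie_gen G"
  proof
    fix v assume v: "v \<in> V"
    have vx: "outer2 v x \<in> lie_gen G" and xv: "outer2 x v \<in> lie_gen G" using oV v x by auto
    show "outer2 v z \<in> lie_gen G \<and> outer2 z v \<in> lie_gen G"
      using chain[OF vx xz xx False] chain[OF zx xv xx False] by auto
  qed
  then have "good G (span (insert z V))" using good_span_insert[OF g zz] by blast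
  moreover have "V \<subseteq> span (insert z V)" by (meson span_superset subset_insertI subset_trans)
  ultimately have "span (insert z V) = V" using mx by blast
  then have "z \<in> V" by (metis insertI1 span_superset subsetD)
  then have "inner z z = 0" using zo by blast
  then have "z = 0" by simp
  then show ?thesis using d yV by simp
qed

lemma max_merge:
  assumes g: "good G V" and mx: "\<forall>W. good G W \<and> V \<subseteq> W \<longrightarrow> W = V"
    and ee: "outer2 e e \<in> lie_gen G" and v: "v \<in> V" and ve: "inner v e \<noteq> 0"
  shows "e \<in> V"
proof -
  have oV: "\<forall>x\<in>V. \<forall>y\<in>V. outer2 x y \<in> lie_gen G" using g unfolding good_def by auto
  have vv: "outer2 v v \<in> lie_gen G" using oV v by auto
  have v0: "v \<noteq> 0" using ve by auto
  from nonorth[OF vv ee ve] have vE: "outer2 v e \<in> lie_gen G" and eV: "outer2 e v \<in> lie_gen G" by auto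
  have "\<forall>w\<in>V. outer2 w e \<in> lie_gen G \<and> outer2 e w \<in> lie_gen G"
  proof
    fix w assume w: "w \<in> V"
    have wv: "outer2 w v \<in> lie_gen G" and vw: "outer2 v w \<in> lie_gen G" using oV v w by auto
    show "outer2 w e \<in> lie_gen G \<and> outer2 e w \<in> lie_gen G"
      using chain[OF wv vE vv v0] chain[OF eV vw vv v0] by auto
  qed
  then have "good G (span (insert e V))" using good_span_insert[OF g ee] by blast
  moreover have "V \<subseteq> span (insert e V)" by (meson span_superset subset_insertI subset_trans)
  ultimately have "span (insert e V) = V" using mx by blast
  then show "e \<in> V" by (metis insertI1 span_superset subsetD)
qed

lemma matpow_Suc_v: "matpow A (Suc k) *v x = A *v (matpow A k *v x)"
  by (simp add: matrix_vector_mul_assoc)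

lemma sym_inner:
  assumes "transpose A = A"
  shows "inner (A *v x) y = inner x (A *v (y::real^'n))"
proof -
  have "A *v x = x v* A" using vector_transpose_matrix[of x A] assms by simp
  then show ?thesis by (simp add: dot_lmul_matrix)
qed

lemma subspace_preimage:
  assumes "subspace T"
  shows "subspace {y. (M::real^'n^'n) *v y \<in> T}"
  unfolding subspace_def
proof (intro conjI allI ballI impI)
  show "0 \<in> {y. M *v y \<in> T}" using assms by (simp add: subspace_0)
next
  fix x y assume "x \<in> {y. M *v y \<in> T}" "y \<in> {y. M *v y \<in> T}"
  then show "x + y \<in> {y. M *v y \<in> T}" using assms by (simp add: matrix_vector_right_distrib subspace_add)
next
  fix c :: real and x assume "x \<in> {y. M *v y \<in> T}"
  then show "c *\<^sub>R x \<in> {y. M *v y \<in> T}" using assms by (simp add: matrix_vector_mult_scaleR subspace_scale)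
qed

lemma krylov_stab:
  fixes A :: "real^'n^'n" and e :: "real^'n"
  shows "matpow A k *v e \<in> span {matpow A i *v e | i. i < CARD('n)}"
proof -
  define KS where "KS m = {matpow A i *v e | i. i < m}" for m
  have ex: "\<exists>m \<le> CARD('n). matpow A m *v e \<in> span (KS m)"
  proof (rule ccontr)
    assume "\<not> ?thesis"
    then have nin: "\<And>m. m \<le> CARD('n) \<Longrightarrow> matpow A m *v e \<notin> span (KS m)" by auto
    have ins: "KS (Suc m) = insert (matpow A m *v e) (KS m)" for m
      unfolding KS_def by (auto simp: less_Suc_eq)
    have "m \<le> Suc (CARD('n)) \<Longrightarrow> dim (KS m) = m" for m
    proof (induction m)
      case 0
      then show ?case by (simp add: KS_def)
    next
      case (Suc m)
      then have "m \<le> CARD('n)" by simp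
      then show ?case using Suc nin[of m] by (simp add: ins dim_insert)
    qed
    then have "dim (KS (Suc (CARD('n)))) = Suc (CARD('n))" by simp
    moreover have "dim (KS (Suc (CARD('n)))) \<le> CARD('n)" by (rule dim_subset_UNIV_cart)
    ultimately show False by simp
  qed
  then obtain m where m: "m \<le> CARD('n)" "matpow A m *v e \<in> span (KS m)" by blast
  have "KS m \<subseteq> {y. A *v y \<in> span (KS m)}"
  proof
    fix y assume "y \<in> KS m"
    then obtain i where i: "i < m" "y = matpow A i *v e" unfolding KS_def by auto
    show "y \<in> {y. A *v y \<in> span (KS m)}"
    proof (cases "Suc i < m")
      case True
      then have "matpow A (Suc i) *v e \<in> KS m" unfolding KS_def by blast
      then show ?thesis using i by (simp add: span_base matpow_Suc_v[symmetric] del: matpow.simps)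
    next
      case False
      then have "Suc i = m" using i by simp
      then show ?thesis using i m by (simp add: matpow_Suc_v[symmetric] del: matpow.simps)
    qed
  qed
  then have inv: "span (KS m) \<subseteq> {y. A *v y \<in> span (KS m)}"
    using span_minimal subspace_preimage subspace_span by blast
  have all: "matpow A k *v e \<in> span (KS m)" for k
  proof (induction k)
    case 0
    show ?case
    proof (cases "0 < m")
      case True
      then have "matpow A 0 *v e \<in> KS m" unfolding KS_def by blast
      then show ?thesis by (rule span_base)
    next
      case False
      then show ?thesis using m by simp
    qed
  next
    case (Suc k)
    have "A *v (matpow A k *v e) \<in> span (KS m)" using inv Suc.IH by blast
    then show ?case by (simp only: matpow_Suc_v)
  qed
  have "span (KS m) \<subseteq> span {matpow A i *v e | i. i < CARD('n)}"
    using m(1) unfolding KS_def by (intro span_mono) auto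
  then show ?thesis using all by blast
qed

lemma reach:
  fixes A :: "real^'n^'n"
  assumes sym: "transpose A = A" and sV: "subspace V" and inv: "\<forall>x\<in>V. A *v x \<in> V"
    and sg: "\<sigma> = 1 \<or> \<sigma> = -1" and pos: "\<forall>i j. i \<noteq> j \<longrightarrow> 0 \<le> \<sigma> * A $ i $ j"
    and e: "axis j0 1 \<in> V" and path: "(graph_adj A)\<^sup>*\<^sup>* j0 k"
  shows "\<exists>v\<in>V. (\<forall>l. 0 \<le> v $ l) \<and> 0 < v $ k"
  using path
proof (induction rule: rtranclp_induct)
  case base
  show ?case using e by (intro bexI[of _ "axis j0 1"]) (auto simp: axis_def)
next
  case (step y z)
  then obtain v where v: "v \<in> V" "\<forall>l. 0 \<le> v $ l" "0 < v $ y" by blast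
  have s: "\<And>i j. A $ i $ j = A $ j $ i"
  proof -
    fix i j
    have "(transpose A) $ j $ i = A $ j $ i" using sym by simp
    then show "A $ i $ j = A $ j $ i" by (simp add: transpose_def)
  qed
  define c where "c = (\<Sum>i\<in>UNIV. \<bar>A $ i $ i\<bar>)"
  have cge: "\<bar>A $ i $ i\<bar> \<le> c" for i
    unfolding c_def by (rule member_le_sum) auto
  define w where "w = c *\<^sub>R v + \<sigma> *\<^sub>R (A *v v)"
  have wV: "w \<in> V" unfolding w_def using sV v(1) inv
    by (simp add: subspace_add subspace_scale)
  define g where "g l m = ((if m = l then c else 0) + \<sigma> * A $ l $ m) * v $ m" for l m
  have wl: "w $ l = (\<Sum>m\<in>UNIV. g l m)" for l
  proof -
    have "(\<Sum>m\<in>UNIV. g l m) = (\<Sum>m\<in>UNIV. (if m = l then c * v $ m else 0) + \<sigma> * (A $ l $ m * v $ m))"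
      unfolding g_def by (rule sum.cong) (auto simp: algebra_simps)
    also have "\<dots> = c * v $ l + \<sigma> * (\<Sum>m\<in>UNIV. A $ l $ m * v $ m)"
      by (simp add: sum.distrib sum_distrib_left)
    finally show ?thesis by (simp add: w_def matrix_vector_mult_def)
  qed
  have gnn: "0 \<le> g l m" for l m
  proof -
    have "0 \<le> (if m = l then c else 0) + \<sigma> * A $ l $ m"
    proof (cases "m = l")
      case True
      have "\<bar>\<sigma> * A $ l $ l\<bar> \<le> c" using cge[of l] sg by auto
      then show ?thesis using True by auto
    next
      case False
      then show ?thesis using pos by auto
    qed
    then show ?thesis unfolding g_def using v(2) by simp
  qed
  have yz: "y \<noteq> z" "A $ z $ y \<noteq> 0" using step(2) s unfolding graph_adj_def by auto
  have "0 < \<sigma> * A $ z $ y"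
  proof -
    have "0 \<le> \<sigma> * A $ z $ y" using pos yz by auto
    moreover have "\<sigma> * A $ z $ y \<noteq> 0" using yz sg by auto
    ultimately show ?thesis by linarith
  qed
  then have "0 < g z y" unfolding g_def using yz v(3) by simp
  also have "g z y \<le> (\<Sum>m\<in>UNIV. g z m)" by (rule member_le_sum) (auto simp: gnn)
  finally have "0 < w $ z" using wl by simp
  moreover have "\<forall>l. 0 \<le> w $ l" using wl gnn by (simp add: sum_nonneg)
  ultimately show ?case using wV by blast
qed

lemma md_t1: "(\<Sum>y\<in>UNIV. M $ x $ y * ((axis x (1::real)) $ i * (axis y (1::real)) $ k))
         = (\<Sum>y\<in>(UNIV::'n::finite set). if y = k then (if x = i then M $ x $ y else 0) else 0)"
  by (rule sum.cong) (auto simp: axis_def)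
lemma md_t2: "(\<Sum>y\<in>(UNIV::'n::finite set). if y = k then (if x = i then (M::real^'n^'n) $ x $ y else 0) else 0) = (if x = i then M $ x $ k else 0)"
  by (simp add: sum.delta')
lemma md_t3: "(\<Sum>x\<in>(UNIV::'n::finite set). (if x = i then (M::real^'n^'n) $ x $ k else 0)) = M $ i $ k"
  by (simp add: sum.delta')

lemma mat_decomp: "M = (\<Sum>i\<in>UNIV. \<Sum>j\<in>UNIV. M $ i $ j *\<^sub>R outer2 (axis i 1) (axis j (1::real)))"
proof -
  have "(\<Sum>i\<in>UNIV. \<Sum>j\<in>UNIV. M $ i $ j *\<^sub>R outer2 (axis i 1) (axis j (1::real))) $ a $ b
     = (\<Sum>x\<in>UNIV. \<Sum>y\<in>UNIV. M $ x $ y * ((axis x (1::real)) $ a * (axis y (1::real)) $ b))" for a b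
    by (simp only: sum_component vector_scaleR_component outer2_def vec_lambda_beta real_scaleR_def)
  also have "\<dots> a b = M $ a $ b" for a b
    by (simp only: md_t1 md_t2 md_t3)
  finally show ?thesis by (simp only: vec_eq_iff) metis
qed

lemma all_in:
  assumes "\<forall>x y. outer2 x y \<in> lie_gen G"
  shows "lie_gen G = UNIV"
proof -
  have "M \<in> lie_gen G" for M
  proof -
    have "(\<Sum>i\<in>UNIV. \<Sum>j\<in>UNIV. M $ i $ j *\<^sub>R outer2 (axis i 1) (axis j (1::real))) \<in> lie_gen G"
      using assms lie_gen_subspace by (intro subspace_sum ballI subspace_scale) auto
    then show ?thesis using mat_decomp[of M] by simp
  qed
  then show ?thesis by auto
qed

lemma outer2_mv: "outer2 a b *v v = inner b v *\<^sub>R a"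
proof -
  have "\<And>i. (\<Sum>j\<in>UNIV. a $ i * b $ j * v $ j) = (\<Sum>j\<in>UNIV. b $ j * v $ j) * a $ i"
    by (simp add: sum_distrib_right sum_distrib_left mult_ac)
  then show ?thesis by (simp add: vec_eq_iff outer2_def matrix_vector_mult_def inner_vec_def)
qed

lemma mv_diff: "((X::real^'n^'n) - Y) *v v = X *v v - Y *v v"
  by (simp add: vec_eq_iff matrix_vector_mult_def sum_subtractf algebra_simps)

lemma lie_invariant:
  assumes T: "subspace T" and gens: "\<forall>Y\<in>G. \<forall>v\<in>T. Y *v v \<in> T"
    and X: "X \<in> lie_gen G"
  shows "\<forall>v\<in>T. X *v v \<in> T"
  using X
proof (induction rule: lie_gen.induct)
  case (base X)
  then show ?case using gens by blast
next
  case zero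
  then show ?case using T by (simp add: subspace_0)
next
  case (add X Y)
  then show ?case using T by (simp add: matrix_vector_mult_add_rdistrib subspace_add)
next
  case (scale X c)
  then show ?case using T by (simp add: scaleR_matrix_vector_assoc[symmetric] subspace_scale)
next
  case (bracket X Y)
  then show ?case using T
    by (simp add: lie_bracket_def mv_diff matrix_vector_mul_assoc[symmetric] subspace_diff)
qed

theorem theorem3p7:
  fixes A :: "real^'n^'n" and S :: "'n set"
  assumes "transpose A = A"
    and "graph_connected A"
    and "(\<forall>i j. i \<noteq> j \<longrightarrow> A $ i $ j \<ge> 0) \<or> (\<forall>i j. i \<noteq> j \<longrightarrow> A $ i $ j \<le> 0)"
    and "S \<noteq> {}"
  shows "W_rank A S = CARD('n) \<longleftrightarrow> lie_AZ A S = UNIV"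
proof -
  note sym = assms(1)
  define G where "G = insert A {outer (axis j 1) | j. j \<in> S}"
  have LG: "lie_AZ A S = lie_gen G" by (simp add: lie_AZ_def G_def)
  have AG: "A \<in> lie_gen G" unfolding G_def by (rule lie_gen.base) simp
  have EG: "outer2 (axis j 1) (axis j 1) \<in> lie_gen G" if "j \<in> S" for j
  proof -
    have "outer (axis j 1) \<in> G" unfolding G_def using that by blast
    then show ?thesis by (simp add: outer_eq[symmetric] lie_gen.base)
  qed
  define K where "K = span (W_cols A S)"
  have sK: "subspace K" unfolding K_def by simp
  have Kinv: "\<forall>x\<in>K. A *v x \<in> K"
  proof -
    have "W_cols A S \<subseteq> {y. A *v y \<in> K}"
    proof
      fix y assume "y \<in> W_cols A S"
      then obtain j k where jk: "j \<in> S" "k < CARD('n)" "y = matpow A k *v axis j 1"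
        unfolding W_cols_def by blast
      have "A *v y = matpow A (Suc k) *v axis j 1" using jk by (simp only: matpow_Suc_v)
      also have "\<dots> \<in> span {matpow A i *v axis j 1 | i. i < CARD('n)}" by (rule krylov_stab)
      also have "\<dots> \<subseteq> K" unfolding K_def using jk(1)
        by (intro span_mono) (auto simp: W_cols_def)
      finally show "y \<in> {y. A *v y \<in> K}" by simp
    qed
    then have "K \<subseteq> {y. A *v y \<in> K}" unfolding K_def
      using span_minimal subspace_preimage[OF sK] K_def by blast
    then show ?thesis by blast
  qed
  have ej: "axis j 1 \<in> K" if "j \<in> S" for j
  proof -
    have "matpow A 0 *v axis j 1 \<in> W_cols A S" unfolding W_cols_def using that by fastforce
    then show ?thesis unfolding K_def by (simp add: span_base)
  qed
  have rankiff: "W_rank A S = CARD('n) \<longleftrightarrow> K = UNIV"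
  proof -
    have "W_rank A S = dim (W_cols A S)" unfolding W_rank_def by simp
    moreover have "dim (W_cols A S) = DIM(real^'n) \<longleftrightarrow> span (W_cols A S) = UNIV"
      by (rule dim_eq_full)
    ultimately show ?thesis unfolding K_def by simp
  qed
  show ?thesis
  proof
    assume "W_rank A S = CARD('n)"
    then have KU: "K = UNIV" using rankiff by simp
    obtain \<sigma> :: real where sg: "\<sigma> = 1 \<or> \<sigma> = -1" and pos: "\<forall>i j. i \<noteq> j \<longrightarrow> 0 \<le> \<sigma> * A $ i $ j"
    proof (cases "\<forall>i j. i \<noteq> j \<longrightarrow> A $ i $ j \<ge> 0")
      case True
      then show ?thesis using that[of 1] by simp
    next
      case False
      then have "\<forall>i j. i \<noteq> j \<longrightarrow> A $ i $ j \<le> 0" using assms(3) by blast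
      then show ?thesis using that[of "-1"] by simp
    qed
    obtain V where g: "good G V" and mx: "\<forall>W. good G W \<and> V \<subseteq> W \<longrightarrow> W = V"
      using exists_max by blast
    have sV: "subspace V" using g unfolding good_def by simp
    have inv: "\<forall>x\<in>V. A *v x \<in> V" using max_invariant[OF g mx AG sym] by blast
    have "\<exists>j0\<in>S. axis j0 1 \<in> V"
    proof (cases "\<exists>j\<in>S. \<exists>v\<in>V. inner v (axis j 1) \<noteq> 0")
      case True
      then obtain j v where jv: "j \<in> S" "v \<in> V" "inner v (axis j 1) \<noteq> 0" by blast
      then show ?thesis using max_merge[OF g mx EG[OF jv(1)] jv(2,3)] by blast
    next
      case False
      then have orth: "\<forall>j\<in>S. \<forall>v\<in>V. inner v (axis j 1) = 0" by blast
      have o2: "inner v (matpow A k *v axis j 1) = 0" if "j \<in> S" "v \<in> V" for j v k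
        using that(2)
      proof (induction k arbitrary: v)
        case 0
        then show ?case using orth that(1) by simp
      next
        case (Suc k)
        have "inner v (matpow A (Suc k) *v axis j 1) = inner (A *v v) (matpow A k *v axis j 1)"
          by (simp only: matpow_Suc_v sym_inner[OF sym])
        also have "\<dots> = 0" using Suc.IH inv Suc.prems by blast
        finally show ?case .
      qed
      have V0: "v = 0" if "v \<in> V" for v
      proof -
        have "\<And>w. w \<in> W_cols A S \<Longrightarrow> orthogonal v w"
          unfolding W_cols_def orthogonal_def using o2 that by blast
        moreover have "v \<in> span (W_cols A S)" using KU K_def by simp
        ultimately have "orthogonal v v" by (rule orthogonal_to_span[rotated])
        then show ?thesis by (simp add: orthogonal_def)
      qed
      obtain j where j: "j \<in> S" using assms(4) by blast
      have "\<forall>v\<in>V. outer2 v (axis j 1) \<in> lie_gen G \<and> outer2 (axis j 1) v \<in> lie_gen G"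
      proof
        fix v assume "v \<in> V"
        then have "v = 0" by (rule V0)
        then show "outer2 v (axis j 1) \<in> lie_gen G \<and> outer2 (axis j 1) v \<in> lie_gen G"
          by (simp add: outer2_zero1 outer2_zero2 lie_gen.zero)
      qed
      then have "good G (span (insert (axis j 1) V))" using good_span_insert[OF g EG[OF j]] by blast
      moreover have "V \<subseteq> span (insert (axis j 1) V)" by (meson span_superset subset_insertI subset_trans)
      ultimately have "span (insert (axis j 1) V) = V" using mx by blast
      then have "axis j 1 \<in> V" by (metis insertI1 span_superset subsetD)
      then show ?thesis using j by blast
    qed
    then obtain j0 where j0: "j0 \<in> S" "axis j0 1 \<in> V" by blast
    have allS: "axis k 1 \<in> V" if "k \<in> S" for k
    proof -
      have "(graph_adj A)\<^sup>*\<^sup>* j0 k" using assms(2) unfolding graph_connected_def by blast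
      from reach[OF sym sV inv sg pos j0(2) this]
      obtain v where v: "v \<in> V" "0 < v $ k" by blast
      have "inner v (axis k 1) \<noteq> 0" using v(2) by (simp add: inner_axis)
      then show ?thesis using max_merge[OF g mx EG[OF that] v(1)] by blast
    qed
    have "matpow A m *v axis k 1 \<in> V" if "k \<in> S" for k m
    proof (induction m)
      case 0
      then show ?case using allS[OF that] by simp
    next
      case (Suc m)
      then show ?case using inv by (simp only: matpow_Suc_v)
    qed
    then have "W_cols A S \<subseteq> V" unfolding W_cols_def by blast
    then have "K \<subseteq> V" unfolding K_def using span_minimal sV by blast
    then have VU: "V = UNIV" using KU by blast
    have "\<forall>x y. outer2 x y \<in> lie_gen G" using g VU unfolding good_def by blast
    then show "lie_AZ A S = UNIV" using all_in LG by simp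
  next
    assume LU: "lie_AZ A S = UNIV"
    have gens: "\<forall>Y\<in>G. \<forall>v\<in>K. Y *v v \<in> K"
    proof
      fix Y assume "Y \<in> G"
      then consider "Y = A" | j where "j \<in> S" "Y = outer (axis j 1)" unfolding G_def by blast
      then show "\<forall>v\<in>K. Y *v v \<in> K"
      proof cases
        case 1
        then show ?thesis using Kinv by simp
      next
        case 2
        then show ?thesis using ej[OF 2(1)] sK
          by (simp add: outer_eq outer2_mv subspace_scale)
      qed
    qed
    obtain j where j: "j \<in> S" using assms(4) by blast
    have "w \<in> K" for w
    proof -
      have "outer2 w (axis j 1) \<in> lie_gen G" using LU LG by simp
      then have "outer2 w (axis j 1) *v axis j 1 \<in> K"
        using lie_invariant[OF sK gens] ej[OF j] by blast
      then show ?thesis by (simp add: outer2_mv inner_axis_axis)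
    qed
    then have "K = UNIV" by blast
    then show "W_rank A S = CARD('n)" using rankiff by simp
  qed
qed

end
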